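(* Let $n\ge2$, $A\in\mathbb{R}^{n\times m}$, $B\in\mathbb{R}^{m\times n}$. If the DSR graph $G_{A,B}$ is steady, then the DSR$^{[2]}$ graph $G^{[2]}_{A,B}$ is steady. In particular, if $G_{A,B}$ is acyclic, then $G^{[2]}_{A,B}$ is steady.
   Context: DSR graphs: for $P\in\mathbb{R}^{n\times m}$, $Q\in\mathbb{R}^{m\times n}$, $G_{P,Q}$ is the signed, labelled bipartite digraph with S-vertices $S_1,\dots,S_n$ and R-vertices $R_1,\dots,R_m$, with an arc $R_j\to S_i$ of sign $\mathrm{sign}(P_{ij})$ iff $P_{ij}\ne0$ and an arc $S_i\to R_j$ of sign $\mathrm{sign}(Q_{ji})$ iff $Q_{ji}\ne0$; antiparallel arcs of equal sign are merged into a single undirected edge. An edge arising from $P_{ij}\ne0$ (R-to-S or undirected) has label $|P_{ij}|$; an edge with only S-to-R orientation has label $\infty$. Walks traverse edges consistently with orientation; a cycle is a nonempty closed walk repeating no vertex except first$=$last (a 2-cycle requires two distinct edges between the same vertices). A cycle $(e_1,\dots,e_{2r})$ is an s-cycle if all its labels are finite and $\prod_{i=1}^r l(e_{2i-1})=\prod_{i=1}^r l(e_{2i})$. A DSR graph is steady if all its cycles are s-cycles, and acyclic if it has no cycles. DSR$^{[2]}$ graph: let $\overline{\mathbf L}^A\in\mathbb{R}^{\binom n2\times mn}$ (rows $(i,j)$, $i<j$; columns $(k,l)$, $1\le k\le m$, $1\le l\le n$) have entries $A_{jk}$ if $l=i$, $-A_{ik}$ if $l=j$, $0$ otherwise, and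 $\underline{\mathbf L}^B\in\mathbb{R}^{mn\times\binom n2}$ have $(k,l),(i,j)$ entry $B_{kj}$ if $l=i$, $-B_{ki}$ if $l=j$, $0$ otherwise. Then $G^{[2]}_{A,B}:=G_{\overline{\mathbf L}^A,\underline{\mathbf L}^B}$. *)

theory Defs
  imports Main "HOL.Real"
begin

datatype ('s, 'r) dsr_vertex = SV 's | RV 'r

text \<open>An edge is a triple (i, j, b) joining S_i and R_j.
  b = True: the edge arising from P i j \<noteq> 0 (an R-to-S arc, merged into an undirected
  edge if Q j i \<noteq> 0 has the same sign); its label is |P i j|.
  b = False: the edge with only S-to-R orientation, present iff Q j i \<noteq> 0 and
  it was not merged; its label is \<infinity>.\<close>
type_synonym ('s, 'r) dsr_edge = "'s \<times> 'r \<times> bool"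

definition dsr_undirected :: "('s \<Rightarrow> 'r \<Rightarrow> real) \<Rightarrow> ('r \<Rightarrow> 's \<Rightarrow> real) \<Rightarrow> 's \<Rightarrow> 'r \<Rightarrow> bool" where
  "dsr_undirected P Q i j \<longleftrightarrow> P i j \<noteq> 0 \<and> Q j i \<noteq> 0 \<and> sgn (P i j) = sgn (Q j i)"

definition dsr_step ::
  "'s set \<Rightarrow> 'r set \<Rightarrow> ('s \<Rightarrow> 'r \<Rightarrow> real) \<Rightarrow> ('r \<Rightarrow> 's \<Rightarrow> real)
   \<Rightarrow> ('s, 'r) dsr_edge \<Rightarrow> ('s, 'r) dsr_vertex \<Rightarrow> ('s, 'r) dsr_vertex \<Rightarrow> bool" where
  "dsr_step SI RI P Q e u v \<longleftrightarrow>
     (case e of (i, j, b) \<Rightarrow> i \<in> SI \<and> j \<in> RI \<and>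
       (if b then
          P i j \<noteq> 0 \<and>
          ((u = RV j \<and> v = SV i) \<or> (u = SV i \<and> v = RV j \<and> dsr_undirected P Q i j))
        else
          Q j i \<noteq> 0 \<and> \<not> dsr_undirected P Q i j \<and> u = SV i \<and> v = RV j))"

text \<open>Label of an edge: Some l for a finite label l, None for \<infinity>.\<close>
definition dsr_label :: "('s \<Rightarrow> 'r \<Rightarrow> real) \<Rightarrow> ('s, 'r) dsr_edge \<Rightarrow> real option" where
  "dsr_label P e = (case e of (i, j, b) \<Rightarrow> if b then Some \<bar>P i j\<bar> else None)"

text \<open>A cycle: vertices vs!0,...,vs!(L-1) (pairwise distinct), edges es!k traversed from
  vs!k to vs!((k+1) mod L); edges pairwise distinct (this only matters for 2-cycles,
  which need two distinct edges).\<close>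
definition dsr_cycle ::
  "'s set \<Rightarrow> 'r set \<Rightarrow> ('s \<Rightarrow> 'r \<Rightarrow> real) \<Rightarrow> ('r \<Rightarrow> 's \<Rightarrow> real)
   \<Rightarrow> ('s, 'r) dsr_vertex list \<Rightarrow> ('s, 'r) dsr_edge list \<Rightarrow> bool" where
  "dsr_cycle SI RI P Q vs es \<longleftrightarrow>
     length vs > 0 \<and> length es = length vs \<and> distinct vs \<and> distinct es \<and>
     (\<forall>k < length vs. dsr_step SI RI P Q (es ! k) (vs ! k) (vs ! ((k + 1) mod length vs)))"

text \<open>s-cycle: all labels finite, and the product of the labels of e_1, e_3, ... equals the
  product of the labels of e_2, e_4, ... (0-based: even vs odd positions).\<close>
definition dsr_s_cycle :: "('s \<Rightarrow> 'r \<Rightarrow> real) \<Rightarrow> ('s, 'r) dsr_edge list \<Rightarrow> bool" where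
  "dsr_s_cycle P es \<longleftrightarrow>
     (\<forall>k < length es. dsr_label P (es ! k) \<noteq> None) \<and>
     (\<Prod>k \<in> {k. k < length es \<and> even k}. the (dsr_label P (es ! k))) =
     (\<Prod>k \<in> {k. k < length es \<and> odd k}. the (dsr_label P (es ! k)))"

definition dsr_steady ::
  "'s set \<Rightarrow> 'r set \<Rightarrow> ('s \<Rightarrow> 'r \<Rightarrow> real) \<Rightarrow> ('r \<Rightarrow> 's \<Rightarrow> real) \<Rightarrow> bool" where
  "dsr_steady SI RI P Q \<longleftrightarrow> (\<forall>vs es. dsr_cycle SI RI P Q vs es \<longrightarrow> dsr_s_cycle P es)"

definition dsr_acyclic ::
  "'s set \<Rightarrow> 'r set \<Rightarrow> ('s \<Rightarrow> 'r \<Rightarrow> real) \<Rightarrow> ('r \<Rightarrow> 's \<Rightarrow> real) \<Rightarrow> bool" where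
  "dsr_acyclic SI RI P Q \<longleftrightarrow> (\<nexists>vs es. dsr_cycle SI RI P Q vs es)"

text \<open>Matrices A (n x m) and B (m x n) are functions on 1-based indices.
  The second additive compound-type matrices, rows/columns indexed by pairs.\<close>
definition Lbar :: "(nat \<Rightarrow> nat \<Rightarrow> real) \<Rightarrow> nat \<times> nat \<Rightarrow> nat \<times> nat \<Rightarrow> real" where
  "Lbar A = (\<lambda>(i, j) (k, l). if l = i then A j k else if l = j then - A i k else 0)"

definition Lund :: "(nat \<Rightarrow> nat \<Rightarrow> real) \<Rightarrow> nat \<times> nat \<Rightarrow> nat \<times> nat \<Rightarrow> real" where
  "Lund B = (\<lambda>(k, l) (i, j). if l = i then B k j else if l = j then - B k i else 0)"

definition pair_S_index :: "nat \<Rightarrow> (nat \<times> nat) set" where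
  "pair_S_index n = {(i, j). 1 \<le> i \<and> i < j \<and> j \<le> n}"

definition pair_R_index :: "nat \<Rightarrow> nat \<Rightarrow> (nat \<times> nat) set" where
  "pair_R_index m n = {1..m} \<times> {1..n}"

definition steady_G :: "nat \<Rightarrow> nat \<Rightarrow> (nat \<Rightarrow> nat \<Rightarrow> real) \<Rightarrow> (nat \<Rightarrow> nat \<Rightarrow> real) \<Rightarrow> bool" where
  "steady_G n m A B = dsr_steady {1..n} {1..m} A B"

definition acyclic_G :: "nat \<Rightarrow> nat \<Rightarrow> (nat \<Rightarrow> nat \<Rightarrow> real) \<Rightarrow> (nat \<Rightarrow> nat \<Rightarrow> real) \<Rightarrow> bool" where
  "acyclic_G n m A B = dsr_acyclic {1..n} {1..m} A B"

definition steady_G2 :: "nat \<Rightarrow> nat \<Rightarrow> (nat \<Rightarrow> nat \<Rightarrow> real) \<Rightarrow> (nat \<Rightarrow> nat \<Rightarrow> real) \<Rightarrow> bool" where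
  "steady_G2 n m A B = dsr_steady (pair_S_index n) (pair_R_index m n) (Lbar A) (Lund B)"

end

theory Submission
  imports Defs
begin

fun isS :: "('s,'r) dsr_vertex \<Rightarrow> bool" where
  "isS (SV _) = True" | "isS (RV _) = False"

fun linked :: "('a \<times> 'b \<times> 'a) list \<Rightarrow> bool" where
  "linked [] = True"
| "linked [x] = True"
| "linked (x # y # r) = (snd (snd x) = fst y \<and> linked (y # r))"

definition vstep where
  "vstep SI RI P Q s \<longleftrightarrow> dsr_step SI RI P Q (fst (snd s)) (fst s) (snd (snd s))"

definition walk where
 "walk SI RI P Q ws x y \<longleftrightarrow> (\<forall>s\<in>set ws. vstep SI RI P Q s) \<and> linked ws \<and> (ws = [] \<longrightarrow> x = y)
    \<and> (ws \<noteq> [] \<longrightarrow> fst (hd ws) = x \<and> snd (snd (last ws)) = y)"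

definition lab where "lab P s = the (dsr_label P (fst (snd s)))"
definition fin where "fin P s \<longleftrightarrow> dsr_label P (fst (snd s)) \<noteq> None"
definition Fp where "Fp P ws = prod_list (map (\<lambda>s. if isS (fst s) then lab P s else 1) ws)"
definition Gp where "Gp P ws = prod_list (map (\<lambda>s. if isS (fst s) then 1 else lab P s) ws)"

lemma step_alt: "dsr_step SI RI P Q e u v \<Longrightarrow> isS u \<noteq> isS v"
  by (auto simp: dsr_step_def split: prod.splits if_splits)

lemma step_RV_fin: "dsr_step SI RI P Q e (RV j) v \<Longrightarrow> dsr_label P e \<noteq> None"
  by (auto simp: dsr_step_def dsr_label_def split: prod.splits if_splits)

lemma linked_nth: "linked ws \<longleftrightarrow> (\<forall>k. Suc k < length ws \<longrightarrow> snd (snd (ws!k)) = fst (ws ! Suc k))"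
proof (induction ws rule: linked.induct)
  case (3 x y r)
  show ?case
  proof
    assume "linked (x # y # r)"
    then show "\<forall>k. Suc k < length (x # y # r) \<longrightarrow> snd (snd ((x # y # r) ! k)) = fst ((x # y # r) ! Suc k)"
      using 3 by (auto simp: nth_Cons split: nat.splits)
  next
    assume a: "\<forall>k. Suc k < length (x # y # r) \<longrightarrow> snd (snd ((x # y # r) ! k)) = fst ((x # y # r) ! Suc k)"
    have "\<forall>k. Suc k < length (y # r) \<longrightarrow> snd (snd ((y # r) ! k)) = fst ((y # r) ! Suc k)"
    proof (intro allI impI)
      fix k assume "Suc k < length (y # r)"
      then show "snd (snd ((y # r) ! k)) = fst ((y # r) ! Suc k)" using a[rule_format, of "Suc k"] by simp
    qed
    then show "linked (x # y # r)" using 3 a[rule_format, of 0] by simp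
  qed
qed auto

lemma linked_append: "linked (xs @ ys) \<longleftrightarrow> linked xs \<and> linked ys \<and>
   (xs \<noteq> [] \<longrightarrow> ys \<noteq> [] \<longrightarrow> snd (snd (last xs)) = fst (hd ys))"
proof (induction xs rule: linked.induct)
  case (2 x)
  then show ?case by (cases ys) auto
qed auto

lemma walk_Nil[simp]: "walk SI RI P Q [] x y \<longleftrightarrow> x = y"
  by (simp add: walk_def)

lemma walk_Cons: "walk SI RI P Q (s#ws) x z \<longleftrightarrow> vstep SI RI P Q s \<and> fst s = x \<and> walk SI RI P Q ws (snd (snd s)) z"
  by (cases ws) (auto simp: walk_def)

lemma walk_append: "walk SI RI P Q ws x y \<Longrightarrow> walk SI RI P Q vs y z \<Longrightarrow> walk SI RI P Q (ws@vs) x z"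
  by (induction ws arbitrary: x) (auto simp: walk_Cons)

lemma walk_split: "walk SI RI P Q (ws@vs) x z \<Longrightarrow> vs \<noteq> [] \<Longrightarrow>
   walk SI RI P Q ws x (fst (hd vs)) \<and> walk SI RI P Q vs (fst (hd vs)) z"
proof (induction ws arbitrary: x)
  case Nil
  then show ?case by (cases vs) (auto simp: walk_def)
next
  case (Cons s ws)
  then show ?case by (auto simp: walk_Cons)
qed

lemma Fp_append[simp]: "Fp P (xs @ ys) = Fp P xs * Fp P ys" by (simp add: Fp_def)
lemma Gp_append[simp]: "Gp P (xs @ ys) = Gp P xs * Gp P ys" by (simp add: Gp_def)
lemma Fp_Cons[simp]: "Fp P (s # ys) = (if isS (fst s) then lab P s else 1) * Fp P ys" by (simp add: Fp_def)
lemma Gp_Cons[simp]: "Gp P (s # ys) = (if isS (fst s) then 1 else lab P s) * Gp P ys" by (simp add: Gp_def)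
lemma Fp_Nil[simp]: "Fp P [] = 1" by (simp add: Fp_def)
lemma Gp_Nil[simp]: "Gp P [] = 1" by (simp add: Gp_def)

lemma walk_alt:
  assumes w: "walk SI RI P Q ws x y"
  shows "k < length ws \<Longrightarrow> isS (fst (ws!k)) = (isS x = even k)"
proof (induction k)
  case 0
  then show ?case using w by (cases ws) (auto simp: walk_def)
next
  case (Suc k)
  have l: "linked ws" and st: "vstep SI RI P Q (ws!k)" using w Suc by (auto simp: walk_def)
  have "fst (ws ! Suc k) = snd (snd (ws!k))" using l Suc by (simp add: linked_nth)
  moreover have "isS (fst (ws!k)) \<noteq> isS (snd (snd (ws!k)))" using st step_alt[of SI RI P Q "fst (snd (ws!k))"] by (simp add: vstep_def)
  ultimately show ?case using Suc by auto
qed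


lemma Fp_nth: "Fp P ws = (\<Prod>k\<in>{k. k < length ws \<and> isS (fst (ws!k))}. lab P (ws!k))"
proof -
  have "Fp P ws = (\<Prod>k\<in>{0..<length ws}. if isS (fst (ws!k)) then lab P (ws!k) else 1)"
    unfolding Fp_def by (subst prod.list_conv_set_nth) simp
  also have "\<dots> = (\<Prod>k\<in>{k \<in> {0..<length ws}. isS (fst (ws!k))}. lab P (ws!k))"
    by (subst prod.inter_filter) auto
  finally show ?thesis by (simp add: atLeast0LessThan lessThan_def)
qed

lemma Gp_nth: "Gp P ws = (\<Prod>k\<in>{k. k < length ws \<and> \<not> isS (fst (ws!k))}. lab P (ws!k))"
proof -
  have "Gp P ws = (\<Prod>k\<in>{0..<length ws}. if \<not> isS (fst (ws!k)) then lab P (ws!k) else 1)"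
    unfolding Gp_def by (subst prod.list_conv_set_nth) (auto intro!: prod.cong)
  also have "\<dots> = (\<Prod>k\<in>{k \<in> {0..<length ws}. \<not> isS (fst (ws!k))}. lab P (ws!k))"
    by (subst prod.inter_filter) auto
  finally show ?thesis by (simp add: atLeast0LessThan lessThan_def)
qed

lemma FG_conv:
  assumes w: "walk SI RI P Q ws x y"
  shows "(Fp P ws = Gp P ws) \<longleftrightarrow>
    (\<Prod>k\<in>{k. k < length ws \<and> even k}. the (dsr_label P (map (fst \<circ> snd) ws ! k))) =
    (\<Prod>k\<in>{k. k < length ws \<and> odd k}. the (dsr_label P (map (fst \<circ> snd) ws ! k)))"
proof -
  have e: "\<And>k. k < length ws \<Longrightarrow> the (dsr_label P (map (fst \<circ> snd) ws ! k)) = lab P (ws!k)"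
    by (simp add: lab_def)
  have s1: "{k. k < length ws \<and> isS (fst (ws!k))} = (if isS x then {k. k < length ws \<and> even k} else {k. k < length ws \<and> odd k})"
    using walk_alt[OF w] by auto
  have s2: "{k. k < length ws \<and> \<not> isS (fst (ws!k))} = (if isS x then {k. k < length ws \<and> odd k} else {k. k < length ws \<and> even k})"
    using walk_alt[OF w] by auto
  have pe: "(\<Prod>k\<in>{k. k < length ws \<and> even k}. the (dsr_label P (map (fst \<circ> snd) ws ! k))) = (\<Prod>k\<in>{k. k < length ws \<and> even k}. lab P (ws!k))"
    by (rule prod.cong) (auto simp: lab_def)
  have po: "(\<Prod>k\<in>{k. k < length ws \<and> odd k}. the (dsr_label P (map (fst \<circ> snd) ws ! k))) = (\<Prod>k\<in>{k. k < length ws \<and> odd k}. lab P (ws!k))"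
    by (rule prod.cong) (auto simp: lab_def)
  show ?thesis unfolding Fp_nth Gp_nth s1 s2 pe po by auto
qed

lemma fin_conv: "(\<forall>s\<in>set ws. fin P s) \<longleftrightarrow> (\<forall>k < length (map (fst \<circ> snd) ws). dsr_label P (map (fst \<circ> snd) ws ! k) \<noteq> None)"
  by (simp add: fin_def all_set_conv_all_nth)

lemma scycle_walk: "walk SI RI P Q ws x y \<Longrightarrow> dsr_s_cycle P (map (fst \<circ> snd) ws) \<Longrightarrow>
   (\<forall>s\<in>set ws. fin P s) \<and> Fp P ws = Gp P ws"
  using FG_conv[of SI RI P Q ws x y] fin_conv[of ws P] unfolding dsr_s_cycle_def by simp

lemma walk_cycle:
  assumes w: "walk SI RI P Q ws x x" and ne: "ws \<noteq> []" and d1: "distinct (map fst ws)"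
    and d2: "distinct (map (fst \<circ> snd) ws)"
  shows "dsr_cycle SI RI P Q (map fst ws) (map (fst \<circ> snd) ws)"
  unfolding dsr_cycle_def
proof (intro conjI allI impI)
  show "0 < length (map fst ws)" using ne by simp
  fix k assume k: "k < length (map fst ws)"
  have st: "vstep SI RI P Q (ws!k)" using w k by (auto simp: walk_def)
  have "map fst ws ! ((k + 1) mod length (map fst ws)) = snd (snd (ws!k))"
  proof (cases "Suc k < length ws")
    case True
    then show ?thesis using w by (auto simp: walk_def linked_nth)
  next
    case False
    then have "k = length ws - 1" using k by simp
    then have "ws ! k = last ws" using ne by (simp add: last_conv_nth)
    moreover have "(k+1) mod length ws = 0" proof -
      have "k + 1 = length ws" using False k by simp
      then show ?thesis by simp
    qed
    ultimately show ?thesis using w ne by (auto simp: walk_def hd_conv_nth)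
  qed
  then show "dsr_step SI RI P Q (map (fst \<circ> snd) ws ! k) (map fst ws ! k) (map fst ws ! ((k + 1) mod length (map fst ws)))"
    using st k by (simp add: vstep_def)
qed (use d1 d2 in auto)

definition cw where
  "cw vs es = map (\<lambda>k. (vs!k, es!k, vs!((k+1) mod length vs))) [0..<length vs]"

lemma cycle_walk:
  assumes c: "dsr_cycle SI RI P Q vs es"
  shows "walk SI RI P Q (cw vs es) (vs!0) (vs!0)" and "map (fst \<circ> snd) (cw vs es) = es"
proof -
  have L: "length vs > 0" "length es = length vs" using c by (auto simp: dsr_cycle_def)
  show "map (fst \<circ> snd) (cw vs es) = es" using L by (intro nth_equalityI) (auto simp: cw_def)
  have "linked (cw vs es)" unfolding linked_nth by (auto simp: cw_def)
  moreover have "\<forall>s\<in>set (cw vs es). vstep SI RI P Q s" using c by (auto simp: cw_def vstep_def dsr_cycle_def)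
  moreover have "cw vs es \<noteq> []" using L by (simp add: cw_def)
  moreover have "fst (hd (cw vs es)) = vs!0" using L by (simp add: cw_def hd_map upt_conv_Cons)
  moreover have "snd (snd (last (cw vs es))) = vs!0" using L by (simp add: cw_def last_map)
  ultimately show "walk SI RI P Q (cw vs es) (vs!0) (vs!0)" by (simp add: walk_def)
qed

lemma walk_scycle:
  assumes c: "dsr_cycle SI RI P Q vs es" and f: "\<forall>s\<in>set (cw vs es). fin P s"
    and e: "Fp P (cw vs es) = Gp P (cw vs es)"
  shows "dsr_s_cycle P es"
  using FG_conv[OF cycle_walk(1)[OF c]] fin_conv[of "cw vs es" P] f e cycle_walk(2)[OF c]
    c[unfolded dsr_cycle_def] length_map[of "fst \<circ> snd" "cw vs es"]
  unfolding dsr_s_cycle_def by simp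


lemma linked_mid: "linked (as @ s # t # bs) \<Longrightarrow> snd (snd s) = fst t"
  by (simp add: linked_append)

lemma two_step_case:
  assumes w: "walk SI RI P Q ws x x" and d1: "distinct (map fst ws)"
    and ws: "ws = xs @ [sa] @ ys @ [sb] @ zs" and ee: "fst (snd sa) = fst (snd sb)"
  shows "(\<forall>s\<in>set ws. fin P s) \<and> Fp P ws = Gp P ws"
proof -
  obtain ua e va where sa: "sa = (ua, e, va)" by (cases sa) auto
  obtain ub e' vb where sb: "sb = (ub, e', vb)" by (cases sb) auto
  have e': "e' = e" using ee sa sb by simp
  have sta: "dsr_step SI RI P Q e ua va" and stb: "dsr_step SI RI P Q e ub vb"
    using w ws sa sb e' by (auto simp: walk_def vstep_def)
  have neq: "ua \<noteq> ub" using d1 ws sa sb by auto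
  obtain i j b where eij: "e = (i, j, b)" by (cases e) auto
  have "(ua = SV i \<and> va = RV j) \<or> (ua = RV j \<and> va = SV i)" using sta eij
    by (auto simp: dsr_step_def split: if_splits)
  moreover have "(ub = SV i \<and> vb = RV j) \<or> (ub = RV j \<and> vb = SV i)" using stb eij
    by (auto simp: dsr_step_def split: if_splits)
  ultimately have swap: "ub = va" "vb = ua" "isS ua \<noteq> isS ub" using neq by auto
  have l: "linked ws" using w by (simp add: walk_def)
  have ys: "ys = []"
  proof (rule ccontr)
    assume "ys \<noteq> []"
    then obtain t ys' where "ys = t # ys'" by (cases ys) auto
    then have "snd (snd sa) = fst (hd ys)" using l ws linked_mid[of xs sa t "ys' @ sb # zs"] by simp
    then have "fst (hd ys) = ub" using sa swap by simp
    moreover have "fst (hd ys) \<in> fst ` set ys" using \<open>ys \<noteq> []\<close> by simp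
    ultimately show False using d1 ws sb by auto
  qed
  have zs: "zs = []"
  proof (rule ccontr)
    assume "zs \<noteq> []"
    then obtain t zs' where "zs = t # zs'" by (cases zs) auto
    then have "snd (snd sb) = fst (hd zs)" using l ws linked_mid[of "xs @ sa # ys" sb t zs'] by simp
    then have "fst (hd zs) = ua" using sb swap by simp
    moreover have "fst (hd zs) \<in> fst ` set zs" using \<open>zs \<noteq> []\<close> by simp
    ultimately show False using d1 ws sa by auto
  qed
  have xs: "xs = []"
  proof (rule ccontr)
    assume "xs \<noteq> []"
    have "snd (snd (last ws)) = x" "fst (hd ws) = x" using w ws by (auto simp: walk_def)
    then have "fst (hd xs) = ua" using ws ys zs sb swap \<open>xs \<noteq> []\<close> by simp
    moreover have "fst (hd xs) \<in> fst ` set xs" using \<open>xs \<noteq> []\<close> by simp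
    ultimately show False using d1 ws sa by auto
  qed
  have finR: "dsr_label P e \<noteq> None"
    using swap sta stb step_RV_fin[of SI RI P Q e] by (cases ua; cases ub) auto
  have wseq: "ws = [(ua,e,va),(va,e,ua)]" using xs ys zs ws sa sb e' swap by simp
  have "isS ua \<noteq> isS va" using swap by simp
  then show ?thesis using finR unfolding wseq by (cases "isS ua") (simp_all add: fin_def lab_def)
qed

lemma closed_walk_steady:
  assumes st: "dsr_steady SI RI P Q"
  shows "walk SI RI P Q ws x x \<Longrightarrow> (\<forall>s\<in>set ws. fin P s) \<and> Fp P ws = Gp P ws"
proof (induction "length ws" arbitrary: ws x rule: less_induct)
  case less
  note w = less.prems
  show ?case
  proof (cases "ws = []")
    case True then show ?thesis by simp
  next
    case ne: False
    show ?thesis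
    proof (cases "distinct (map fst ws)")
      case False
      then obtain as y bs cs where "map fst ws = as @ [y] @ bs @ [y] @ cs"
        using not_distinct_decomp by blast
      then have "\<exists>xs r. ws = xs @ r \<and> as = map fst xs \<and> [y] @ bs @ [y] @ cs = map fst r"
        by (simp only: map_eq_append_conv)
      then obtain xs r where ws1: "ws = xs @ r" "map fst r = [y] @ bs @ [y] @ cs"
        by metis
      then have "map fst r = (y # bs) @ (y # cs)" by simp
      then have "\<exists>ys zs. r = ys @ zs \<and> y # bs = map fst ys \<and> y # cs = map fst zs"
        by (simp only: map_eq_append_conv)
      then obtain ys zs where r: "r = ys @ zs" "map fst ys = y # bs" "map fst zs = y # cs"
        by metis
      have ne2: "ys \<noteq> []" "zs \<noteq> []" using r by auto
      have hh: "fst (hd ys) = y" "fst (hd zs) = y" using r ne2 by (auto simp: hd_map[symmetric])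
      have ws: "ws = xs @ ys @ zs" using ws1 r by simp
      from walk_split[of SI RI P Q xs "ys @ zs" x x] w ws ne2
      have wx: "walk SI RI P Q xs x y" and wyz: "walk SI RI P Q (ys @ zs) y x" using hh by auto
      from walk_split[OF wyz ne2(2)] hh
      have wy: "walk SI RI P Q ys y y" and wz: "walk SI RI P Q zs y x" by auto
      have wxz: "walk SI RI P Q (xs @ zs) x x" using walk_append[OF wx wz] .
      have "length ys < length ws" "length (xs @ zs) < length ws" using ws ne2 by auto
      note lens = this
      have ih1: "(\<forall>s\<in>set ys. fin P s) \<and> Fp P ys = Gp P ys" using less.hyps[OF lens(1) wy] .
      have ih2: "(\<forall>s\<in>set (xs @ zs). fin P s) \<and> Fp P (xs @ zs) = Gp P (xs @ zs)"
        using less.hyps[OF lens(2) wxz] .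
      have f1: "Fp P ws = Fp P ys * Fp P (xs @ zs)" unfolding ws Fp_append by (simp only: mult_ac)
      have f2: "Gp P ws = Gp P ys * Gp P (xs @ zs)" unfolding ws Gp_append by (simp only: mult_ac)
      have "set ws = set ys \<union> set (xs @ zs)" using ws by auto
      then show ?thesis using ih1 ih2 f1 f2 by auto
    next
      case d1: True
      show ?thesis
      proof (cases "distinct (map (fst \<circ> snd) ws)")
        case True
        have "dsr_cycle SI RI P Q (map fst ws) (map (fst \<circ> snd) ws)"
          using walk_cycle[OF w ne d1 True] .
        then have "dsr_s_cycle P (map (fst \<circ> snd) ws)" using st by (simp add: dsr_steady_def)
        then show ?thesis using scycle_walk[OF w] by blast
      next
        case False
        then obtain as y bs cs where "map (fst \<circ> snd) ws = as @ [y] @ bs @ [y] @ cs"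
          using not_distinct_decomp by blast
        then have "\<exists>xs r. ws = xs @ r \<and> as = map (fst \<circ> snd) xs \<and> [y] @ bs @ [y] @ cs = map (fst \<circ> snd) r"
          by (simp only: map_eq_append_conv)
        then obtain xs r where r1: "ws = xs @ r" "map (fst \<circ> snd) r = y # bs @ y # cs"
          by (metis append_Cons append_Nil)
        then obtain sa r2 where r2: "r = sa # r2" "fst (snd sa) = y" "map (fst \<circ> snd) r2 = bs @ y # cs"
          by (cases r) auto
        then have "\<exists>ys r3. r2 = ys @ r3 \<and> bs = map (fst \<circ> snd) ys \<and> y # cs = map (fst \<circ> snd) r3"
          by (simp only: map_eq_append_conv)
        then obtain ys r3 where r3: "r2 = ys @ r3" "map (fst \<circ> snd) r3 = y # cs"
          by metis
        then obtain sb zs where r4: "r3 = sb # zs" "fst (snd sb) = y"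
          by (cases r3) auto
        have "ws = xs @ [sa] @ ys @ [sb] @ zs" using r1 r2 r3 r4 by simp
        then show ?thesis using two_step_case[OF w d1] r2 r4 by metis
      qed
    qed
  qed
qed


fun tau :: "(nat \<times> nat, nat \<times> nat) dsr_vertex \<Rightarrow> (nat, nat) dsr_vertex set" where
  "tau (SV (i, j)) = {SV i, SV j}"
| "tau (RV (k, l)) = {SV l, RV k}"

lemma Lbar1: "Lbar A (i, j) (k, i) = A j k" by (simp add: Lbar_def)
lemma Lbar2: "j \<noteq> i \<Longrightarrow> Lbar A (i, j) (k, j) = - A i k" by (simp add: Lbar_def)
lemma Lbar0: "l \<noteq> i \<Longrightarrow> l \<noteq> j \<Longrightarrow> Lbar A (i, j) (k, l) = 0" by (simp add: Lbar_def)
lemma Lund1: "Lund B (k, i) (i, j) = B k j" by (simp add: Lund_def)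
lemma Lund2: "j \<noteq> i \<Longrightarrow> Lund B (k, j) (i, j) = - B k i" by (simp add: Lund_def)
lemma Lund0: "l \<noteq> i \<Longrightarrow> l \<noteq> j \<Longrightarrow> Lund B (k, l) (i, j) = 0" by (simp add: Lund_def)

lemma und1: "dsr_undirected (Lbar A) (Lund B) (i, j) (k, i) = dsr_undirected A B j k"
  by (simp add: dsr_undirected_def Lbar1 Lund1)
lemma und2: "j \<noteq> i \<Longrightarrow> dsr_undirected (Lbar A) (Lund B) (i, j) (k, j) = dsr_undirected A B i k"
  by (simp add: dsr_undirected_def Lbar2 Lund2 sgn_minus)

lemma g2_step:
  assumes st: "dsr_step (pair_S_index n) (pair_R_index m n) (Lbar A) (Lund B) e u v"
  shows "\<exists>e' u0 v0 s0. dsr_step {1..n} {1..m} A B e' u0 v0 \<and> tau u = {u0, s0} \<and> tau v = {v0, s0}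
     \<and> u0 \<noteq> s0 \<and> v0 \<noteq> s0 \<and> dsr_label (Lbar A) e = dsr_label A e' \<and> isS u0 = isS u"
proof -
  obtain i j k l b where e: "e = ((i, j), (k, l), b)" by (cases e) auto
  have ij: "1 \<le> i" "i < j" "j \<le> n" and kl: "1 \<le> k" "k \<le> m" "1 \<le> l" "l \<le> n"
    using st e by (auto simp: dsr_step_def pair_S_index_def pair_R_index_def)
  have nz: "Lbar A (i, j) (k, l) \<noteq> 0 \<or> Lund B (k, l) (i, j) \<noteq> 0"
    using st e by (auto simp: dsr_step_def split: if_splits)
  have lij: "l = i \<or> l = j" using nz Lbar0 Lund0 by metis
  show ?thesis
  proof (cases "l = i")
    case True
    note li = True
    show ?thesis
    proof (cases b)
      case True
      have A: "A j k \<noteq> 0" using st e li True Lbar1[of A i j k] by (simp add: dsr_step_def)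
      have uv: "(u = RV (k, i) \<and> v = SV (i, j)) \<or> (u = SV (i, j) \<and> v = RV (k, i) \<and> dsr_undirected A B j k)"
        using st e li True und1[of A B i j k] by (simp add: dsr_step_def)
      then show ?thesis
      proof
        assume h: "u = RV (k, i) \<and> v = SV (i, j)"
        show ?thesis
          apply (rule exI[of _ "(j, k, True)"], rule exI[of _ "RV k"], rule exI[of _ "SV j"], rule exI[of _ "SV i"])
          using h ij kl A e li True by (auto simp: dsr_step_def dsr_label_def Lbar1)
      next
        assume h: "u = SV (i, j) \<and> v = RV (k, i) \<and> dsr_undirected A B j k"
        show ?thesis
          apply (rule exI[of _ "(j, k, True)"], rule exI[of _ "SV j"], rule exI[of _ "RV k"], rule exI[of _ "SV i"])
          using h ij kl A e li True by (auto simp: dsr_step_def dsr_label_def Lbar1)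
      qed
    next
      case False
      have h: "B k j \<noteq> 0" "\<not> dsr_undirected A B j k" "u = SV (i, j)" "v = RV (k, i)"
        using st e li False und1[of A B i j k] Lund1[of B k i j] by (simp_all add: dsr_step_def)
      show ?thesis
        apply (rule exI[of _ "(j, k, False)"], rule exI[of _ "SV j"], rule exI[of _ "RV k"], rule exI[of _ "SV i"])
        using h ij kl e li False by (auto simp: dsr_step_def dsr_label_def)
    qed
  next
    case False
    then have lj: "l = j" and ji: "j \<noteq> i" using lij ij by auto
    show ?thesis
    proof (cases b)
      case True
      have A: "A i k \<noteq> 0" using st e lj ji True Lbar2[of j i A k] by (simp add: dsr_step_def)
      have uv: "(u = RV (k, j) \<and> v = SV (i, j)) \<or> (u = SV (i, j) \<and> v = RV (k, j) \<and> dsr_undirected A B i k)"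
        using st e lj ji True und2[of j i A B k] by (simp add: dsr_step_def)
      then show ?thesis
      proof
        assume h: "u = RV (k, j) \<and> v = SV (i, j)"
        show ?thesis
          apply (rule exI[of _ "(i, k, True)"], rule exI[of _ "RV k"], rule exI[of _ "SV i"], rule exI[of _ "SV j"])
          using h ij kl A e lj ji True by (auto simp: dsr_step_def dsr_label_def Lbar2)
      next
        assume h: "u = SV (i, j) \<and> v = RV (k, j) \<and> dsr_undirected A B i k"
        show ?thesis
          apply (rule exI[of _ "(i, k, True)"], rule exI[of _ "SV i"], rule exI[of _ "RV k"], rule exI[of _ "SV j"])
          using h ij kl A e lj ji True by (auto simp: dsr_step_def dsr_label_def Lbar2)
      qed
    next
      case False
      have h: "B k i \<noteq> 0" "\<not> dsr_undirected A B i k" "u = SV (i, j)" "v = RV (k, j)"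
        using st e lj ji False und2[of j i A B k] Lund2[of j i B k] by (simp_all add: dsr_step_def)
      show ?thesis
        apply (rule exI[of _ "(i, k, False)"], rule exI[of _ "SV i"], rule exI[of _ "RV k"], rule exI[of _ "SV j"])
        using h ij kl e lj ji False by (auto simp: dsr_step_def dsr_label_def)
    qed
  qed
qed


lemma token:
  "walk (pair_S_index n) (pair_R_index m n) (Lbar A) (Lund B) ws V W \<Longrightarrow> tau V = {x, y} \<Longrightarrow> x \<noteq> y \<Longrightarrow>
   \<exists>x' y' w1 w2. tau W = {x', y'} \<and> x' \<noteq> y' \<and> walk {1..n} {1..m} A B w1 x x' \<and> walk {1..n} {1..m} A B w2 y y'
     \<and> Fp (Lbar A) ws = Fp A w1 * Fp A w2 \<and> Gp (Lbar A) ws = Gp A w1 * Gp A w2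
     \<and> ((\<forall>s\<in>set w1. fin A s) \<longrightarrow> (\<forall>s\<in>set w2. fin A s) \<longrightarrow> (\<forall>s\<in>set ws. fin (Lbar A) s))"
proof (induction ws arbitrary: V x y)
  case Nil
  then show ?case by (intro exI[of _ x] exI[of _ y] exI[of _ "[]"]) simp
next
  case (Cons s ws)
  obtain V0 e V1 where s: "s = (V0, e, V1)" by (cases s) auto
  have st: "dsr_step (pair_S_index n) (pair_R_index m n) (Lbar A) (Lund B) e V V1"
    and wr: "walk (pair_S_index n) (pair_R_index m n) (Lbar A) (Lund B) ws V1 W" and V0: "V0 = V"
    using Cons.prems(1) s by (auto simp: walk_Cons vstep_def)
  obtain e' u0 v0 s0 where g: "dsr_step {1..n} {1..m} A B e' u0 v0" "tau V = {u0, s0}" "tau V1 = {v0, s0}"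
     "u0 \<noteq> s0" "v0 \<noteq> s0" "dsr_label (Lbar A) e = dsr_label A e'" "isS u0 = isS V"
    using g2_step[OF st] by blast
  have lb: "lab (Lbar A) s = lab A (u0, e', v0)" "fin (Lbar A) s = fin A (u0, e', v0)"
    using g s by (auto simp: lab_def fin_def)
  have vs: "vstep {1..n} {1..m} A B (u0, e', v0)" using g by (simp add: vstep_def)
  have "(x = u0 \<and> y = s0) \<or> (x = s0 \<and> y = u0)" using Cons.prems(2,3) g(2,4) by (auto simp: doubleton_eq_iff)
  then show ?case
  proof
    assume xy: "x = u0 \<and> y = s0"
    obtain x' y' w1 w2 where ih: "tau W = {x', y'}" "x' \<noteq> y'" "walk {1..n} {1..m} A B w1 v0 x'"
      "walk {1..n} {1..m} A B w2 y y'" "Fp (Lbar A) ws = Fp A w1 * Fp A w2" "Gp (Lbar A) ws = Gp A w1 * Gp A w2"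
      "(\<forall>s\<in>set w1. fin A s) \<longrightarrow> (\<forall>s\<in>set w2. fin A s) \<longrightarrow> (\<forall>s\<in>set ws. fin (Lbar A) s)"
    proof -
      have "tau V1 = {v0, y}" "v0 \<noteq> y" using g xy by auto
      from Cons.IH[OF wr this] show ?thesis using that by blast
    qed
    show ?thesis
      apply (rule exI[of _ x'], rule exI[of _ y'], rule exI[of _ "(u0, e', v0) # w1"], rule exI[of _ w2])
      using ih vs xy lb s V0 g(7) by (auto simp: walk_Cons)
  next
    assume xy: "x = s0 \<and> y = u0"
    obtain x' y' w1 w2 where ih: "tau W = {x', y'}" "x' \<noteq> y'" "walk {1..n} {1..m} A B w1 x x'"
      "walk {1..n} {1..m} A B w2 v0 y'" "Fp (Lbar A) ws = Fp A w1 * Fp A w2" "Gp (Lbar A) ws = Gp A w1 * Gp A w2"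
      "(\<forall>s\<in>set w1. fin A s) \<longrightarrow> (\<forall>s\<in>set w2. fin A s) \<longrightarrow> (\<forall>s\<in>set ws. fin (Lbar A) s)"
    proof -
      have "tau V1 = {x, v0}" "x \<noteq> v0" using g xy by (auto simp: insert_commute)
      from Cons.IH[OF wr this] show ?thesis using that by blast
    qed
    show ?thesis
      apply (rule exI[of _ x'], rule exI[of _ y'], rule exI[of _ w1], rule exI[of _ "(u0, e', v0) # w2"])
      using ih vs xy lb s V0 g(7) by (auto simp: walk_Cons mult_ac)
  qed
qed

lemma steady_G2_of_G:
  assumes st: "steady_G n m A B"
  shows "steady_G2 n m A B"
  unfolding steady_G2_def dsr_steady_def
proof (intro allI impI)
  fix vs es
  assume c: "dsr_cycle (pair_S_index n) (pair_R_index m n) (Lbar A) (Lund B) vs es"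
  have stG: "dsr_steady {1..n} {1..m} A B" using st by (simp add: steady_G_def)
  let ?ws = "cw vs es"
  have w: "walk (pair_S_index n) (pair_R_index m n) (Lbar A) (Lund B) ?ws (vs!0) (vs!0)"
    using cycle_walk(1)[OF c] .
  have "dsr_step (pair_S_index n) (pair_R_index m n) (Lbar A) (Lund B) (es!0) (vs!0) (vs!((0+1) mod length vs))"
    using c by (auto simp: dsr_cycle_def)
  then obtain x y where xy: "tau (vs!0) = {x, y}" "x \<noteq> y" using g2_step by blast
  obtain x' y' w1 w2 where t: "{x', y'} = {x, y}" "x' \<noteq> y'" "walk {1..n} {1..m} A B w1 x x'"
      "walk {1..n} {1..m} A B w2 y y'" "Fp (Lbar A) ?ws = Fp A w1 * Fp A w2" "Gp (Lbar A) ?ws = Gp A w1 * Gp A w2"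
      "(\<forall>s\<in>set w1. fin A s) \<longrightarrow> (\<forall>s\<in>set w2. fin A s) \<longrightarrow> (\<forall>s\<in>set ?ws. fin (Lbar A) s)"
    using token[OF w xy] xy(1) by metis
  have "(x' = x \<and> y' = y) \<or> (x' = y \<and> y' = x)" using t(1) xy(2) by (auto simp: doubleton_eq_iff)
  then have res: "(\<forall>s\<in>set ?ws. fin (Lbar A) s) \<and> Fp (Lbar A) ?ws = Gp (Lbar A) ?ws"
  proof
    assume h: "x' = x \<and> y' = y"
    have "(\<forall>s\<in>set w1. fin A s) \<and> Fp A w1 = Gp A w1" using closed_walk_steady[OF stG] t(3) h by simp
    moreover have "(\<forall>s\<in>set w2. fin A s) \<and> Fp A w2 = Gp A w2" using closed_walk_steady[OF stG] t(4) h by simp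
    ultimately show ?thesis using t by simp
  next
    assume h: "x' = y \<and> y' = x"
    have "walk {1..n} {1..m} A B (w1 @ w2) x x" using walk_append t(3,4) h by metis
    then have "(\<forall>s\<in>set (w1 @ w2). fin A s) \<and> Fp A (w1 @ w2) = Gp A (w1 @ w2)"
      using closed_walk_steady[OF stG] by blast
    then show ?thesis using t by simp
  qed
  show "dsr_s_cycle (Lbar A) es" using walk_scycle[OF c] res by blast
qed

theorem corollary5p1:
  fixes n m :: nat and A B :: "nat \<Rightarrow> nat \<Rightarrow> real"
  assumes "n \<ge> 2"
  shows "(steady_G n m A B \<longrightarrow> steady_G2 n m A B) \<and>
         (acyclic_G n m A B \<longrightarrow> steady_G2 n m A B)"
proof -
  have "acyclic_G n m A B \<Longrightarrow> steady_G n m A B"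
    by (simp add: acyclic_G_def steady_G_def dsr_acyclic_def dsr_steady_def)
  then show ?thesis using steady_G2_of_G by blast
qed

end
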